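(* Let $Z=x\frac{\partial}{\partial x}+\sum_{k=1}^n\big(\mathcal{A}y+G(x,y)\big)_k\frac{\partial}{\partial y_k}$ be a polynomial vector field on $\mathbb{C}^{n+1}$, where $\mathcal{A}\in\mathfrak{gl}(n,\mathbb{C})$ and $G$ is a polynomial map whose components lie in the ideal $(y_1,\dots,y_n)^2$. Suppose there are $\delta_0,\delta_1,\epsilon>0$ with $$(-\delta_1+\epsilon)|y|^2<\operatorname{Re}\langle\mathcal{A}y,y\rangle<(-\delta_0-\epsilon)|y|^2\quad\text{for all }y\in\mathbb{C}^n\setminus\{0\}.$$ For $x_0\in\widehat{\mathbb{D}}(2)$ and $y_0\in\mathbb{C}^n$, let $w(t)=(x_0^{1-t},y(t))$ be the solution of $w'=-\log(x_0)\,Z(w)$, $w(0)=(x_0,y_0)$, and when it is defined on $[0,1]$ set $f_{x_0}(y_0)=y(1)$. Then there exist $r,c_0,c_1>0$ such that for every $x\in\widehat{\mathbb{D}}(2)$ the map $f_x$ is defined on $\{|y|<r\}$ and $$c_1|x|^{\delta_1}|u-v|\le|f_x(u)-f_x(v)|\le c_0|x|^{\delta_0}|u-v|$$ for all $x\in\widehat{\mathbb{D}}(2)$ and $|u|,|v|<r$.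
   Context: $\widehat{\mathbb{D}}(2)=\{x\in\mathbb{C}\setminus(-\infty,0]:|x|<2\}$. $\log$ is the principal determination of the logarithm and $x_0^{1-t}=\exp((1-t)\log x_0)$. $\langle\cdot,\cdot\rangle$ is the standard Hermitian inner product and $|\cdot|$ the Euclidean norm. *)

theory Defs
  imports "HOL-Analysis.Analysis"
begin

definition slit_disc2 :: "complex set" where
  "slit_disc2 = {x. \<not> (Im x = 0 \<and> Re x \<le> 0) \<and> cmod x < 2}"

definition herm :: "complex^'n \<Rightarrow> complex^'n \<Rightarrow> complex" where
  "herm u v = (\<Sum>k\<in>UNIV. u $ k * cnj (v $ k))"

text \<open>G is a polynomial map C x C^n -> C^n (in the variables x, y_1..y_n) each of whose
  components lies in the ideal (y_1,...,y_n)^2: a finite linear combination of monomials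
  x^a y^alpha with total y-degree |alpha| >= 2.\<close>
definition poly_map_sq_ideal :: "(complex \<Rightarrow> complex^'n \<Rightarrow> complex^'n) \<Rightarrow> bool" where
  "poly_map_sq_ideal G \<longleftrightarrow>
     (\<forall>k. \<exists>S c. finite (S :: (nat \<times> ('n \<Rightarrow> nat)) set)
        \<and> (\<forall>(a, \<alpha>)\<in>S. (\<Sum>i\<in>UNIV. \<alpha> i) \<ge> 2)
        \<and> (\<forall>x y. G x y $ k =
             (\<Sum>(a, \<alpha>)\<in>S. c (a, \<alpha>) * x ^ a * (\<Prod>i\<in>UNIV. (y $ i) ^ (\<alpha> i)))))"

text \<open>y is the y-component on [0,1] of the solution w(t) = (x0^(1-t), y(t)) of
  w' = - log(x0) Z(w), w(0) = (x0, y0), with Z = x d/dx + sum_k (A y + G(x,y))_k d/dy_k.\<close>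
definition is_flow_sol ::
  "complex^'n^'n \<Rightarrow> (complex \<Rightarrow> complex^'n \<Rightarrow> complex^'n) \<Rightarrow> complex \<Rightarrow> complex^'n
     \<Rightarrow> (real \<Rightarrow> complex^'n) \<Rightarrow> bool" where
  "is_flow_sol A G x0 y0 y \<longleftrightarrow> y 0 = y0 \<and>
     (\<forall>t\<in>{0..1}. (y has_vector_derivative
         ((- Ln x0) *s (A *v y t + G (exp (complex_of_real (1 - t) * Ln x0)) (y t))))
       (at t within {0..1}))"

definition flow_defined ::
  "complex^'n^'n \<Rightarrow> (complex \<Rightarrow> complex^'n \<Rightarrow> complex^'n) \<Rightarrow> complex \<Rightarrow> complex^'n \<Rightarrow> bool" where
  "flow_defined A G x0 y0 \<longleftrightarrow> (\<exists>y. is_flow_sol A G x0 y0 y)"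

text \<open>f_{x0}(y0) = y(1) (the solution is unique when it exists).\<close>
definition flow_map ::
  "complex^'n^'n \<Rightarrow> (complex \<Rightarrow> complex^'n \<Rightarrow> complex^'n) \<Rightarrow> complex \<Rightarrow> complex^'n \<Rightarrow> complex^'n" where
  "flow_map A G x0 y0 = (THE z. \<exists>y. is_flow_sol A G x0 y0 y \<and> y 1 = z)"

end

theory Submission
  imports Defs "HOL-Analysis.Analysis"
begin


lemma norm_smult_vec: "norm (c *s (v::complex^'n)) = cmod c * norm v"
  unfolding norm_vec_def
  by (simp add: L2_set_right_distrib norm_mult)

lemma inner_herm: "inner (u::complex^'n) v = Re (herm u v)"
  unfolding inner_vec_def herm_def inner_complex_def
  by (simp add: Re_sum)

lemma herm_smult: "herm (c *s u) v = c * herm (u::complex^'n) v"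
  unfolding herm_def by (simp add: sum_distrib_left mult.assoc)

lemma herm_add: "herm (u + w) v = herm u v + herm (w::complex^'n) v"
  unfolding herm_def by (simp add: sum.distrib distrib_right)

lemma Im_herm: "Im (herm u v) = inner (u::complex^'n) (\<i> *s v)"
  unfolding inner_herm herm_def by (simp add: sum_distrib_left Re_sum Im_sum mult.commute mult.left_commute)

lemma abs_Re_herm: "\<bar>Re (herm u v)\<bar> \<le> norm (u::complex^'n) * norm v"
  by (metis inner_herm Cauchy_Schwarz_ineq2)

lemma abs_Im_herm: "\<bar>Im (herm u v)\<bar> \<le> norm (u::complex^'n) * norm v"
  using Cauchy_Schwarz_ineq2[of u "\<i> *s v"] by (simp add: Im_herm norm_smult_vec)

lemma inner_smult: "inner (c *s u) (v::complex^'n) = Re c * Re (herm u v) - Im c * Im (herm u v)"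
  by (simp add: inner_herm herm_smult)



lemma inner_sq_deriv:
  fixes d :: "real \<Rightarrow> 'v::real_inner"
  assumes "(d has_vector_derivative D) (at x)"
  shows "((\<lambda>s. inner (d s) (d s)) has_real_derivative (2 * inner D (d x))) (at x)"
proof -
  have "(d has_derivative (\<lambda>h. h *\<^sub>R D)) (at x)"
    using assms by (simp add: has_vector_derivative_def)
  then have "((\<lambda>s. inner (d s) (d s)) has_derivative (\<lambda>h. inner (d x) (h *\<^sub>R D) + inner (h *\<^sub>R D) (d x))) (at x)"
    by (intro derivative_intros)
  then show ?thesis
    unfolding has_field_derivative_def
    by (rule has_derivative_eq_rhs) (auto simp: fun_eq_iff algebra_simps inner_commute)
qed

lemma cont_of_deriv:
  fixes d :: "real \<Rightarrow> 'v::real_normed_vector"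
  assumes der: "\<And>t. t\<in>{0..1} \<Longrightarrow> (d has_vector_derivative d' t) (at t within {0..1})"
  shows "continuous_on {0..1} d"
  using der by (rule continuous_on_vector_derivative)

lemma growth_aux:
  fixes d :: "real \<Rightarrow> 'v::real_inner"
  assumes der: "\<And>t. t\<in>{0..1} \<Longrightarrow> (d has_vector_derivative d' t) (at t within {0..1})"
    and t: "t\<in>{0..1}"
  shows "continuous_on {0..t} (\<lambda>s. exp (b * s) * inner (d s) (d s))"
    and "\<And>x. 0 < x \<Longrightarrow> x < t \<Longrightarrow> ((\<lambda>s. exp (b * s) * inner (d s) (d s)) has_real_derivative
          exp (b * x) * (b * inner (d x) (d x) + 2 * inner (d' x) (d x))) (at x)"
proof -
  have c: "continuous_on {0..1} d" by (rule cont_of_deriv[OF der])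
  have "continuous_on {0..t} d" using c t by (auto intro: continuous_on_subset)
  then show "continuous_on {0..t} (\<lambda>s. exp (b * s) * inner (d s) (d s))"
    by (intro continuous_intros)
  fix x assume x: "0 < x" "x < t"
  then have "(d has_vector_derivative d' x) (at x)"
    using der[of x] t at_within_Icc_at[of 0 x 1] by auto
  from inner_sq_deriv[OF this]
  have "((\<lambda>s. exp (b * s) * inner (d s) (d s)) has_real_derivative
          (exp (b * x) * (2 * inner (d' x) (d x)) + (b * exp (b*x)) * inner (d x) (d x))) (at x)"
    by (auto intro!: derivative_eq_intros)
  then show "((\<lambda>s. exp (b * s) * inner (d s) (d s)) has_real_derivative
          exp (b * x) * (b * inner (d x) (d x) + 2 * inner (d' x) (d x))) (at x)"
    by (simp add: algebra_simps)
qed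

lemma growth_le:
  fixes d :: "real \<Rightarrow> 'v::real_inner"
  assumes der: "\<And>t. t\<in>{0..1} \<Longrightarrow> (d has_vector_derivative d' t) (at t within {0..1})"
    and bd: "\<And>t. t\<in>{0..1} \<Longrightarrow> inner (d' t) (d t) \<le> a * (norm (d t))\<^sup>2"
    and t: "t\<in>{0..1}"
  shows "(norm (d t))\<^sup>2 \<le> exp (2*a*t) * (norm (d 0))\<^sup>2"
proof -
  let ?f = "\<lambda>s. exp ((-2*a) * s) * inner (d s) (d s)"
  have "?f t \<le> ?f 0"
  proof (rule DERIV_nonpos_imp_decreasing_open[of 0 t ?f])
    show "0 \<le> t" using t by auto
    show "continuous_on {0..t} ?f" by (rule growth_aux(1)[OF der t])
    fix x assume x: "0 < x" "x < t"
    have "x \<in> {0..1}" using x t by auto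
    then have "(-2*a) * inner (d x) (d x) + 2 * inner (d' x) (d x) \<le> 0"
      using bd[of x] by (simp add: power2_norm_eq_inner)
    then have "exp ((-2*a) * x) * ((-2*a) * inner (d x) (d x) + 2 * inner (d' x) (d x)) \<le> 0"
      by (simp add: mult_nonneg_nonpos)
    then show "\<exists>y. (?f has_real_derivative y) (at x) \<and> y \<le> 0"
      using growth_aux(2)[OF der t x] by blast
  qed
  then have "exp (-2*a*t) * (norm (d t))\<^sup>2 \<le> (norm (d 0))\<^sup>2"
    by (simp add: power2_norm_eq_inner)
  then have "exp (2*a*t) * (exp (-2*a*t) * (norm (d t))\<^sup>2) \<le> exp (2*a*t) * (norm (d 0))\<^sup>2"
    by (simp add: mult_left_mono)
  then show ?thesis by (simp add: mult.assoc[symmetric] exp_add[symmetric])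
qed

lemma growth_ge:
  fixes d :: "real \<Rightarrow> 'v::real_inner"
  assumes der: "\<And>t. t\<in>{0..1} \<Longrightarrow> (d has_vector_derivative d' t) (at t within {0..1})"
    and bd: "\<And>t. t\<in>{0..1} \<Longrightarrow> a * (norm (d t))\<^sup>2 \<le> inner (d' t) (d t)"
    and t: "t\<in>{0..1}"
  shows "exp (2*a*t) * (norm (d 0))\<^sup>2 \<le> (norm (d t))\<^sup>2"
proof -
  let ?f = "\<lambda>s. exp ((-2*a) * s) * inner (d s) (d s)"
  have "?f 0 \<le> ?f t"
  proof (rule DERIV_nonneg_imp_increasing_open[of 0 t ?f])
    show "0 \<le> t" using t by auto
    show "continuous_on {0..t} ?f" by (rule growth_aux(1)[OF der t])
    fix x assume x: "0 < x" "x < t"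
    have "x \<in> {0..1}" using x t by auto
    then have "(-2*a) * inner (d x) (d x) + 2 * inner (d' x) (d x) \<ge> 0"
      using bd[of x] by (simp add: power2_norm_eq_inner)
    then have "exp ((-2*a) * x) * ((-2*a) * inner (d x) (d x) + 2 * inner (d' x) (d x)) \<ge> 0"
      by simp
    then show "\<exists>y. (?f has_real_derivative y) (at x) \<and> y \<ge> 0"
      using growth_aux(2)[OF der t x] by blast
  qed
  then have "(norm (d 0))\<^sup>2 \<le> exp (-2*a*t) * (norm (d t))\<^sup>2"
    by (simp add: power2_norm_eq_inner)
  then have "exp (2*a*t) * (norm (d 0))\<^sup>2 \<le> exp (2*a*t) * (exp (-2*a*t) * (norm (d t))\<^sup>2)"
    by (simp add: mult_left_mono)
  then show ?thesis by (simp add: mult.assoc[symmetric] exp_add[symmetric])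
qed



lemma int_cont:
  fixes g :: "real \<Rightarrow> 'v::banach"
  assumes "continuous_on {0..1} g"
  shows "continuous_on {0..1} (\<lambda>t. integral {0..t} g)"
  by (rule continuous_on_vector_derivative, rule integral_has_vector_derivative[OF assms])

lemma exp_integral:
  fixes \<gamma> t :: real
  assumes "\<gamma> > 0" "0 \<le> t"
  shows "((\<lambda>s. exp (\<gamma> * s)) has_integral ((exp (\<gamma> * t) - 1) / \<gamma>)) {0..t}"
proof -
  have "((\<lambda>s. exp (\<gamma> * s)) has_integral ((\<lambda>s. exp (\<gamma> * s) / \<gamma>) t - (\<lambda>s. exp (\<gamma> * s) / \<gamma>) 0)) {0..t}"
  proof (rule fundamental_theorem_of_calculus)
    show "0 \<le> t" by fact
    fix x assume "x \<in> {0..t}"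
    have "((\<lambda>s. exp (\<gamma> * s) / \<gamma>) has_real_derivative (exp (\<gamma> * x) * (\<gamma> * 1) / \<gamma>)) (at x within {0..t})"
      using assms by (intro derivative_eq_intros) auto
    then show "((\<lambda>s. exp (\<gamma> * s) / \<gamma>) has_vector_derivative exp (\<gamma> * x)) (at x within {0..t})"
      using assms by (simp add: has_real_derivative_iff_has_vector_derivative)
  qed
  then show ?thesis by (simp add: diff_divide_distrib)
qed

lemma ode_exists:
  fixes F :: "real \<Rightarrow> 'v::banach \<Rightarrow> 'v"
  assumes cont: "\<And>y. continuous_on {0..1} y \<Longrightarrow> continuous_on {0..1} (\<lambda>s. F s (y s))"
    and lip: "\<And>t a b. t \<in> {0..1} \<Longrightarrow> norm (F t a - F t b) \<le> K * norm (a - b)"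
    and K: "K > 0"
  shows "\<exists>y. y 0 = y0 \<and> (\<forall>t\<in>{0..1}. (y has_vector_derivative F t (y t)) (at t within {0..1}))"
proof -
  define p :: "nat \<Rightarrow> real \<Rightarrow> 'v" where
    "p = rec_nat (\<lambda>t. y0) (\<lambda>k q t. y0 + integral {0..t} (\<lambda>s. F s (q s)))"
  have p0: "p 0 = (\<lambda>t. y0)" and pS: "\<And>k. p (Suc k) = (\<lambda>t. y0 + integral {0..t} (\<lambda>s. F s (p k s)))"
    by (simp_all add: p_def)
  have pc: "continuous_on {0..1} (p k)" for k
  proof (induction k)
    case 0 then show ?case by (simp add: p0)
  next
    case (Suc k)
    show ?case unfolding pS
      by (intro continuous_intros int_cont cont Suc)
  qed
  have intg: "\<And>t. t \<in> {0..1} \<Longrightarrow> continuous_on {0..1} g \<Longrightarrow> g integrable_on {0..t}" for g :: "real \<Rightarrow> 'v"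
    by (rule integrable_continuous_interval, erule continuous_on_subset) auto
  have "continuous_on {0..1} (\<lambda>s. F s y0)" using cont[of "\<lambda>s. y0"] by simp
  then have "bounded ((\<lambda>s. F s y0) ` {0..1})"
    by (intro compact_imp_bounded compact_continuous_image) auto
  then obtain M where M: "M > 0" "\<And>s. s \<in> {0..1} \<Longrightarrow> norm (F s y0) \<le> M"
    by (auto simp: bounded_pos)
  define \<gamma> where "\<gamma> = 2 * K"
  have \<gamma>: "\<gamma> > 0" using K by (simp add: \<gamma>_def)
  have step: "\<forall>t\<in>{0..1}. norm (p (Suc k) t - p k t) \<le> M * exp (\<gamma> * t) / 2 ^ k" for k
  proof (induction k)
    case 0
    show ?case
    proof
      fix t :: real assume t: "t \<in> {0..1}"
      have "norm (p (Suc 0) t - p 0 t) = norm (integral {0..t} (\<lambda>s. F s y0))"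
        by (simp add: pS p0)
      also have "\<dots> \<le> integral {0..t} (\<lambda>s. M)"
        apply (rule Henstock_Kurzweil_Integration.integral_norm_bound_integral)
        using t by (auto intro!: intg cont M simp: p0)
      also have "\<dots> = M * t" using t by simp
      also have "\<dots> \<le> M * exp (\<gamma> * t)"
      proof -
        have "0 \<le> \<gamma> * t" using t \<gamma> by simp
        then have "t \<le> 1 + \<gamma> * t" using t by auto
        also have "\<dots> \<le> exp (\<gamma> * t)" by (rule exp_ge_add_one_self)
        finally show ?thesis using M by (simp add: mult_left_mono)
      qed
      finally show "norm (p (Suc 0) t - p 0 t) \<le> M * exp (\<gamma> * t) / 2 ^ 0" by simp
    qed
  next
    case (Suc k)
    show ?case
    proof
      fix t :: real assume t: "t \<in> {0..1}"
      have e1: "p (Suc (Suc k)) t = y0 + integral {0..t} (\<lambda>s. F s (p (Suc k) s))"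
        using fun_cong[OF pS[of "Suc k"], of t] by simp
      have e2: "p (Suc k) t = y0 + integral {0..t} (\<lambda>s. F s (p k s))"
        using fun_cong[OF pS[of k], of t] by simp
      have "p (Suc (Suc k)) t - p (Suc k) t = integral {0..t} (\<lambda>s. F s (p (Suc k) s) - F s (p k s))"
        unfolding e1 e2 by (simp add: integral_diff[symmetric] intg[OF t] cont pc)
      also have "norm \<dots> \<le> integral {0..t} (\<lambda>s. (K * M / 2 ^ k) * exp (\<gamma> * s))"
      proof (rule Henstock_Kurzweil_Integration.integral_norm_bound_integral)
        show "(\<lambda>s. F s (p (Suc k) s) - F s (p k s)) integrable_on {0..t}"
          by (intro intg t continuous_intros cont pc)
        show "(\<lambda>s. (K * M / 2 ^ k) * exp (\<gamma> * s)) integrable_on {0..t}"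
          by (intro integrable_continuous_interval continuous_intros)
        fix s assume s: "s \<in> {0..t}"
        then have s1: "s \<in> {0..1}" using t by auto
        have "norm (F s (p (Suc k) s) - F s (p k s)) \<le> K * norm (p (Suc k) s - p k s)"
          by (rule lip[OF s1])
        also have "\<dots> \<le> K * (M * exp (\<gamma> * s) / 2 ^ k)"
          using Suc s1 K by (intro mult_left_mono) auto
        finally show "norm (F s (p (Suc k) s) - F s (p k s)) \<le> (K * M / 2 ^ k) * exp (\<gamma> * s)"
          by simp
      qed
      also have "\<dots> = (K * M / 2 ^ k) * ((exp (\<gamma> * t) - 1) / \<gamma>)"
        using exp_integral[OF \<gamma>, of t] t by (simp add: integral_unique)
      also have "\<dots> \<le> (K * M / 2 ^ k) * (exp (\<gamma> * t) / \<gamma>)"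
        using K M \<gamma> by (intro mult_left_mono divide_right_mono) auto
      also have "\<dots> = M * exp (\<gamma> * t) / 2 ^ Suc k"
        using K by (simp add: \<gamma>_def field_simps)
      finally show "norm (p (Suc (Suc k)) t - p (Suc k) t) \<le> M * exp (\<gamma> * t) / 2 ^ Suc k" .
    qed
  qed
  define B where "B = M * exp \<gamma>"
  have B: "B > 0" using M by (simp add: B_def)
  have step': "norm (p (Suc k) t - p k t) \<le> B / 2 ^ k" if t: "t \<in> {0..1}" for k t
  proof -
    have "M * exp (\<gamma> * t) \<le> M * exp \<gamma>" using t \<gamma> M by (auto intro!: mult_left_mono)
    then have "M * exp (\<gamma> * t) / 2 ^ k \<le> M * exp \<gamma> / 2 ^ k" by (simp add: divide_right_mono)
    then show ?thesis using step[of k] t unfolding B_def by (meson order_trans)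
  qed
  have cauchy: "norm (p (m + d) t - p m t) \<le> 2 * B / 2 ^ m - 2 * B / 2 ^ (m + d)" if t: "t \<in> {0..1}" for m d t
  proof (induction d)
    case 0 then show ?case by simp
  next
    case (Suc d)
    have "norm (p (m + Suc d) t - p m t) \<le> norm (p (m + d) t - p m t) + norm (p (Suc (m + d)) t - p (m + d) t)"
      by (simp add: norm_triangle_sub [of "p (Suc (m+d)) t - p m t" "p (m + d) t - p m t"] norm_minus_commute)
         (metis add.commute diff_add_cancel norm_triangle_ineq add_diff_eq)
    also have "\<dots> \<le> (2 * B / 2 ^ m - 2 * B / 2 ^ (m + d)) + B / 2 ^ (m + d)"
      using Suc step'[OF t, of "m + d"] by linarith
    also have "\<dots> = 2 * B / 2 ^ m - 2 * B / 2 ^ (m + Suc d)"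
      by (simp add: field_simps)
    finally show ?case .
  qed
  have "uniformly_Cauchy_on {0..1} p"
  proof (rule uniformly_Cauchy_onI)
    fix e :: real assume e: "e > 0"
    obtain N where N: "(1/2::real) ^ N < e / (2 * B)"
      using real_arch_pow_inv[of "e / (2 * B)" "1/2::real"] e B by auto
    show "\<exists>M. \<forall>x\<in>{0..1}. \<forall>m\<ge>M. \<forall>n\<ge>M. dist (p m x) (p n x) < e"
    proof (intro exI ballI allI impI)
      fix x :: real and m n :: nat assume x: "x \<in> {0..1}" and m: "N \<le> m" and n: "N \<le> n"
      have key: "dist (p a x) (p b x) < e" if ab: "a \<le> b" "N \<le> a" for a b
      proof -
        obtain d where b: "b = a + d" using ab le_Suc_ex by blast
        have "dist (p a x) (p b x) \<le> 2 * B / 2 ^ a - 2 * B / 2 ^ (a + d)"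
          using cauchy[OF x, of a d] by (simp add: b dist_norm norm_minus_commute)
        also have "\<dots> \<le> 2 * B * (1/2) ^ a" using B by (simp add: power_divide)
        also have "\<dots> \<le> 2 * B * (1/2) ^ N" using B ab by (intro mult_left_mono power_decreasing) auto
        also have "\<dots> < e" using N B by (simp add: field_simps)
        finally show ?thesis .
      qed
      show "dist (p m x) (p n x) < e"
        using key[of m n] key[of n m] m n by (cases "m \<le> n") (auto simp: dist_commute)
    qed
  qed
  then have "uniformly_convergent_on {0..1} p" by (rule Cauchy_uniformly_convergent)
  then obtain y where yl: "uniform_limit {0..1} p y sequentially"
    by (auto simp: uniformly_convergent_on_def)
  have yc: "continuous_on {0..1} y"
    by (rule uniform_limit_theorem[OF _ yl]) (auto simp: pc)
  have gl: "uniform_limit {0..1} (\<lambda>k s. F s (p k s)) (\<lambda>s. F s (y s)) sequentially"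
  proof (rule uniform_limitI)
    fix e :: real assume e: "e > 0"
    have "\<forall>\<^sub>F n in sequentially. \<forall>x\<in>{0..1}. dist (p n x) (y x) < e / K"
      using yl e K by (auto simp: uniform_limit_iff)
    then show "\<forall>\<^sub>F n in sequentially. \<forall>x\<in>{0..1}. dist (F x (p n x)) (F x (y x)) < e"
    proof eventually_elim
      case (elim n)
      show ?case
      proof
        fix x :: real assume x: "x \<in> {0..1}"
        have "dist (F x (p n x)) (F x (y x)) \<le> K * dist (p n x) (y x)"
          using lip[OF x] by (simp add: dist_norm)
        also have "\<dots> < K * (e / K)" using elim x K by (intro mult_strict_left_mono) auto
        finally show "dist (F x (p n x)) (F x (y x)) < e" using K by simp
      qed
    qed
  qed
  have yfix: "y t = y0 + integral {0..t} (\<lambda>s. F s (y s))" if t: "t \<in> {0..1}" for t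
  proof -
    have sub: "{0..t} \<subseteq> {0..1}" using t by auto
    obtain I J where I: "\<And>n. ((\<lambda>s. F s (p n s)) has_integral I n) {0..t}"
      and J: "((\<lambda>s. F s (y s)) has_integral J) {0..t}" and IJ: "I \<longlonglongrightarrow> J"
      by (rule uniform_limit_integral[OF uniform_limit_on_subset[OF gl sub]])
         (auto intro: continuous_on_subset[OF cont[OF pc] sub])
    have "(\<lambda>n. p (Suc n) t) \<longlonglongrightarrow> y0 + J"
    proof -
      have "integral {0..t} (\<lambda>s. F s (p n s)) = I n" for n using I[of n] by (rule integral_unique)
      then show ?thesis unfolding pS using IJ by (simp add: tendsto_add)
    qed
    moreover have "(\<lambda>n. p (Suc n) t) \<longlonglongrightarrow> y t"
      using tendsto_uniform_limitI[OF yl t] by (rule LIMSEQ_Suc)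
    ultimately have "y t = y0 + J" using LIMSEQ_unique by blast
    then show ?thesis using J by (simp add: integral_unique)
  qed
  define z where "z = (\<lambda>t. y0 + integral {0..t} (\<lambda>s. F s (y s)))"
  have gc: "continuous_on {0..1} (\<lambda>s. F s (y s))" by (rule cont[OF yc])
  show ?thesis
  proof (intro exI conjI ballI)
    show "z 0 = y0" by (simp add: z_def)
    fix t :: real assume t: "t \<in> {0..1}"
    have "(z has_vector_derivative F t (y t)) (at t within {0..1})"
      unfolding z_def using integral_has_vector_derivative[OF gc t]
      by (intro derivative_eq_intros) auto
    then show "(z has_vector_derivative F t (z t)) (at t within {0..1})"
      using yfix[OF t] by (simp add: z_def)
  qed
qed



lemma power_diff_bound:
  fixes a b :: complex
  assumes "0 < \<rho>" "norm a \<le> \<rho>" "norm b \<le> \<rho>" "norm (a - b) \<le> \<delta>"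
  shows "norm (a ^ k - b ^ k) \<le> real k * \<rho> ^ k * \<delta> / \<rho>"
proof (induction k)
  case 0 then show ?case by simp
next
  case (Suc k)
  have d0: "0 \<le> \<delta>" using assms(4) norm_ge_zero order_trans by blast
  have "a ^ Suc k - b ^ Suc k = (a ^ k - b ^ k) * a + b ^ k * (a - b)"
    by (simp add: algebra_simps)
  then have "norm (a ^ Suc k - b ^ Suc k) \<le> norm (a ^ k - b ^ k) * norm a + norm b ^ k * norm (a - b)"
    by (metis norm_mult norm_power norm_triangle_ineq)
  also have "\<dots> \<le> (real k * \<rho> ^ k * \<delta> / \<rho>) * \<rho> + \<rho> ^ k * \<delta>"
  proof (rule add_mono)
    show "norm (a ^ k - b ^ k) * norm a \<le> (real k * \<rho> ^ k * \<delta> / \<rho>) * \<rho>"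
      using Suc assms d0 by (intro mult_mono) auto
    show "norm b ^ k * norm (a - b) \<le> \<rho> ^ k * \<delta>"
      using assms d0 by (intro mult_mono power_mono) auto
  qed
  also have "\<dots> = real (Suc k) * \<rho> ^ Suc k * \<delta> / \<rho>"
    using assms by (simp add: field_simps)
  finally show ?case .
qed
lemma prod_bound:
  fixes a :: "'i \<Rightarrow> complex"
  assumes "finite I" "\<And>i. i \<in> I \<Longrightarrow> norm (a i) \<le> \<rho>" "0 \<le> \<rho>"
  shows "norm (\<Prod>i\<in>I. a i ^ \<alpha> i) \<le> \<rho> ^ (\<Sum>i\<in>I. \<alpha> i)"
  using assms(1,2)
proof (induction I rule: finite_induct)
  case empty then show ?case by simp
next
  case (insert j I)
  have "norm (\<Prod>i\<in>insert j I. a i ^ \<alpha> i) = norm (a j) ^ \<alpha> j * norm (\<Prod>i\<in>I. a i ^ \<alpha> i)"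
    using insert(1,2) by (simp add: norm_mult norm_power)
  also have "\<dots> \<le> \<rho> ^ \<alpha> j * \<rho> ^ (\<Sum>i\<in>I. \<alpha> i)"
  proof (rule mult_mono)
    show "norm (a j) ^ \<alpha> j \<le> \<rho> ^ \<alpha> j" using insert(4)[of j] by (intro power_mono) auto
    show "norm (\<Prod>i\<in>I. a i ^ \<alpha> i) \<le> \<rho> ^ (\<Sum>i\<in>I. \<alpha> i)" using insert(3,4) by blast
  qed (use assms(3) in auto)
  also have "\<dots> = \<rho> ^ (\<Sum>i\<in>insert j I. \<alpha> i)"
    using insert(1,2) by (simp add: power_add)
  finally show ?case .
qed

lemma diff_prod_aux: "(x::complex) * P - y * Q = (x - y) * P + y * (P - Q)"
  by (simp add: algebra_simps)

lemma prod_diff_bound: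
  fixes a b :: "'i \<Rightarrow> complex"
  assumes "finite I" "0 < \<rho>" "0 \<le> \<delta>"
    and "\<And>i. i \<in> I \<Longrightarrow> norm (a i) \<le> \<rho>" "\<And>i. i \<in> I \<Longrightarrow> norm (b i) \<le> \<rho>"
    and "\<And>i. i \<in> I \<Longrightarrow> norm (a i - b i) \<le> \<delta>"
  shows "norm ((\<Prod>i\<in>I. a i ^ \<alpha> i) - (\<Prod>i\<in>I. b i ^ \<alpha> i))
           \<le> real (\<Sum>i\<in>I. \<alpha> i) * \<rho> ^ (\<Sum>i\<in>I. \<alpha> i) * \<delta> / \<rho>"
  using assms(1,4,5,6)
proof (induction I rule: finite_induct)
  case empty then show ?case by simp
next
  case (insert j I)
  let ?PA = "\<Prod>i\<in>I. a i ^ \<alpha> i" and ?PB = "\<Prod>i\<in>I. b i ^ \<alpha> i" and ?s = "\<Sum>i\<in>I. \<alpha> i"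
  have r0: "0 \<le> \<rho>" using assms(2) by simp
  have IH: "norm (?PA - ?PB) \<le> real ?s * \<rho> ^ ?s * \<delta> / \<rho>" using insert(3-6) by blast
  have PA: "norm ?PA \<le> \<rho> ^ ?s" using insert(1,4) r0 by (intro prod_bound) auto
  have "(\<Prod>i\<in>insert j I. a i ^ \<alpha> i) - (\<Prod>i\<in>insert j I. b i ^ \<alpha> i)
        = (a j ^ \<alpha> j - b j ^ \<alpha> j) * ?PA + b j ^ \<alpha> j * (?PA - ?PB)"
  proof -
    have "(\<Prod>i\<in>insert j I. a i ^ \<alpha> i) - (\<Prod>i\<in>insert j I. b i ^ \<alpha> i) = a j ^ \<alpha> j * ?PA - b j ^ \<alpha> j * ?PB"
      using insert(1,2) by simp
    then show ?thesis by (simp only: diff_prod_aux)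
  qed
  then have "norm ((\<Prod>i\<in>insert j I. a i ^ \<alpha> i) - (\<Prod>i\<in>insert j I. b i ^ \<alpha> i))
        = norm ((a j ^ \<alpha> j - b j ^ \<alpha> j) * ?PA + b j ^ \<alpha> j * (?PA - ?PB))" by (simp only:)
  also have "\<dots> \<le> norm ((a j ^ \<alpha> j - b j ^ \<alpha> j) * ?PA) + norm (b j ^ \<alpha> j * (?PA - ?PB))"
    by (rule norm_triangle_ineq)
  also have "\<dots> = norm (a j ^ \<alpha> j - b j ^ \<alpha> j) * norm ?PA + norm (b j) ^ \<alpha> j * norm (?PA - ?PB)"
    by (simp only: norm_mult norm_power)
  also have "\<dots> \<le> (real (\<alpha> j) * \<rho> ^ \<alpha> j * \<delta> / \<rho>) * \<rho> ^ ?s + \<rho> ^ \<alpha> j * (real ?s * \<rho> ^ ?s * \<delta> / \<rho>)"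
  proof (rule add_mono)
    have "norm (a j ^ \<alpha> j - b j ^ \<alpha> j) \<le> real (\<alpha> j) * \<rho> ^ \<alpha> j * \<delta> / \<rho>"
      using insert(4-6)[of j] assms(2) by (intro power_diff_bound) auto
    then show "norm (a j ^ \<alpha> j - b j ^ \<alpha> j) * norm ?PA \<le> (real (\<alpha> j) * \<rho> ^ \<alpha> j * \<delta> / \<rho>) * \<rho> ^ ?s"
      using PA by (rule mult_mono) (use assms(2,3) in auto)
    have "norm (b j) ^ \<alpha> j \<le> \<rho> ^ \<alpha> j" using insert(5)[of j] by (intro power_mono) auto
    then show "norm (b j) ^ \<alpha> j * norm (?PA - ?PB) \<le> \<rho> ^ \<alpha> j * (real ?s * \<rho> ^ ?s * \<delta> / \<rho>)"
      using IH by (rule mult_mono) (use r0 in auto)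
  qed
  also have "\<dots> = real (\<Sum>i\<in>insert j I. \<alpha> i) * \<rho> ^ (\<Sum>i\<in>insert j I. \<alpha> i) * \<delta> / \<rho>"
    using insert(1,2) assms(2) by (simp add: field_simps power_add)
  finally show ?case .
qed
lemma mono_diff_bound:
  fixes u v :: "complex^'n"
  assumes "0 < \<rho>" "norm u \<le> \<rho>" "norm v \<le> \<rho>" "2 \<le> (\<Sum>i\<in>UNIV. \<alpha> i)"
  shows "norm ((\<Prod>i\<in>UNIV. (u $ i) ^ \<alpha> i) - (\<Prod>i\<in>UNIV. (v $ i) ^ \<alpha> i))
           \<le> real (\<Sum>i\<in>UNIV. \<alpha> i) * (max 1 \<rho>) ^ (\<Sum>i\<in>UNIV. \<alpha> i) * \<rho> * norm (u - v)"
proof -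
  let ?s = "\<Sum>i\<in>UNIV. \<alpha> i"
  have "norm ((\<Prod>i\<in>UNIV. (u $ i) ^ \<alpha> i) - (\<Prod>i\<in>UNIV. (v $ i) ^ \<alpha> i))
           \<le> real ?s * \<rho> ^ ?s * norm (u - v) / \<rho>"
  proof (rule prod_diff_bound)
    fix i
    show "norm (u $ i) \<le> \<rho>" using Finite_Cartesian_Product.norm_nth_le[of u i] assms(2) by linarith
    show "norm (v $ i) \<le> \<rho>" using Finite_Cartesian_Product.norm_nth_le[of v i] assms(3) by linarith
    show "norm (u $ i - v $ i) \<le> norm (u - v)" using Finite_Cartesian_Product.norm_nth_le[of "u - v" i] by simp
  qed (use assms(1) in auto)
  also have "\<dots> = (real ?s * norm (u - v)) * (\<rho> ^ ?s / \<rho>)" by simp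
  also have "\<dots> \<le> (real ?s * norm (u - v)) * ((max 1 \<rho>) ^ ?s * \<rho>)"
  proof (rule mult_left_mono)
    obtain m where m: "?s = m + 2" using assms(4) by (metis add.commute le_Suc_ex)
    have "\<rho> ^ m \<le> (max 1 \<rho>) ^ m" using assms by (intro power_mono) auto
    also have "\<dots> \<le> (max 1 \<rho>) ^ (m + 2)" by (intro power_increasing) auto
    finally have "\<rho> ^ m * \<rho> \<le> (max 1 \<rho>) ^ (m + 2) * \<rho>" using assms by (simp add: mult_right_mono)
    moreover have "\<rho> ^ (m + 2) / \<rho> = \<rho> ^ m * \<rho>" using assms by (simp add: power_add power2_eq_square)
    ultimately show "\<rho> ^ ?s / \<rho> \<le> (max 1 \<rho>) ^ ?s * \<rho>" by (simp only: m)
    show "0 \<le> real ?s * norm (u - v)" by (simp only: of_nat_0_le_iff norm_ge_zero mult_nonneg_nonneg)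
  qed
  finally show ?thesis by (simp add: mult_ac)
qed

lemma norm_le_l1_vec: "norm (x::'a::real_normed_vector^'n) \<le> (\<Sum>i\<in>UNIV. norm (x $ i))"
  unfolding norm_vec_def by (rule L2_set_le_sum) simp



lemma poly_obtain:
  assumes "poly_map_sq_ideal (G :: complex \<Rightarrow> complex^'n \<Rightarrow> complex^'n)"
  obtains S c where "\<And>k. finite (S k)" "\<And>k a \<alpha>. (a, \<alpha>) \<in> S k \<Longrightarrow> 2 \<le> (\<Sum>i\<in>UNIV. \<alpha> i)"
    "\<And>k x y. G x y $ k = (\<Sum>p\<in>S k. c k p * x ^ fst p * (\<Prod>i\<in>UNIV. (y $ i) ^ (snd p i)))"
proof -
  from assms have "\<forall>k. \<exists>S c. finite (S :: (nat \<times> ('n \<Rightarrow> nat)) set)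
        \<and> (\<forall>(a, \<alpha>)\<in>S. (\<Sum>i\<in>UNIV. \<alpha> i) \<ge> 2)
        \<and> (\<forall>x y. G x y $ k = (\<Sum>(a, \<alpha>)\<in>S. c (a, \<alpha>) * x ^ a * (\<Prod>i\<in>UNIV. (y $ i) ^ (\<alpha> i))))"
    by (simp add: poly_map_sq_ideal_def)
  then have "\<exists>S. \<forall>k. \<exists>c. finite (S k :: (nat \<times> ('n \<Rightarrow> nat)) set)
        \<and> (\<forall>(a, \<alpha>)\<in>S k. (\<Sum>i\<in>UNIV. \<alpha> i) \<ge> 2)
        \<and> (\<forall>x y. G x y $ k = (\<Sum>(a, \<alpha>)\<in>S k. c (a, \<alpha>) * x ^ a * (\<Prod>i\<in>UNIV. (y $ i) ^ (\<alpha> i))))"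
    by (rule choice)
  then obtain S where "\<forall>k. \<exists>c. finite (S k :: (nat \<times> ('n \<Rightarrow> nat)) set)
        \<and> (\<forall>(a, \<alpha>)\<in>S k. (\<Sum>i\<in>UNIV. \<alpha> i) \<ge> 2)
        \<and> (\<forall>x y. G x y $ k = (\<Sum>(a, \<alpha>)\<in>S k. c (a, \<alpha>) * x ^ a * (\<Prod>i\<in>UNIV. (y $ i) ^ (\<alpha> i))))"
    by blast
  then have "\<exists>c. \<forall>k. finite (S k)
        \<and> (\<forall>(a, \<alpha>)\<in>S k. (\<Sum>i\<in>UNIV. \<alpha> i) \<ge> 2)
        \<and> (\<forall>x y. G x y $ k = (\<Sum>(a, \<alpha>)\<in>S k. c k (a, \<alpha>) * x ^ a * (\<Prod>i\<in>UNIV. (y $ i) ^ (\<alpha> i))))"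
    by (rule choice)
  then obtain c where c: "\<forall>k. finite (S k)
        \<and> (\<forall>(a, \<alpha>)\<in>S k. (\<Sum>i\<in>UNIV. \<alpha> i) \<ge> 2)
        \<and> (\<forall>x y. G x y $ k = (\<Sum>(a, \<alpha>)\<in>S k. c k (a, \<alpha>) * x ^ a * (\<Prod>i\<in>UNIV. (y $ i) ^ (\<alpha> i))))"
    by blast
  show ?thesis
  proof (rule that[of S c])
    fix k show "finite (S k)" using c by blast
    fix a \<alpha> assume "(a, \<alpha>) \<in> S k" then show "2 \<le> (\<Sum>i\<in>UNIV. \<alpha> i)" using c by blast
  next
    fix k x y
    have "G x y $ k = (\<Sum>(a, \<alpha>)\<in>S k. c k (a, \<alpha>) * x ^ a * (\<Prod>i\<in>UNIV. (y $ i) ^ (\<alpha> i)))"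
      using c by blast
    then show "G x y $ k = (\<Sum>p\<in>S k. c k p * x ^ fst p * (\<Prod>i\<in>UNIV. (y $ i) ^ (snd p i)))"
      by (simp add: case_prod_beta)
  qed
qed

lemma G_zero:
  assumes "poly_map_sq_ideal (G :: complex \<Rightarrow> complex^'n \<Rightarrow> complex^'n)"
  shows "G x 0 = 0"
proof -
  obtain S c where S: "\<And>k. finite (S k)" "\<And>k a \<alpha>. (a, \<alpha>) \<in> S k \<Longrightarrow> 2 \<le> (\<Sum>i\<in>UNIV. \<alpha> i)"
    "\<And>k x y. G x y $ k = (\<Sum>p\<in>S k. c k p * x ^ fst p * (\<Prod>i\<in>UNIV. (y $ i) ^ (snd p i)))"
    using poly_obtain[OF assms] by blast
  have "G x 0 $ k = 0" for k
  proof -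
    have "(\<Prod>i\<in>UNIV. ((0::complex^'n) $ i) ^ (snd p i)) = 0" if p: "p \<in> S k" for p
    proof -
      have "2 \<le> (\<Sum>i\<in>UNIV. snd p i)" using S(2)[of "fst p" "snd p" k] p by simp
      have "\<not> (\<forall>i. snd p i = 0)"
      proof
        assume "\<forall>i. snd p i = 0"
        then have "(\<Sum>i\<in>UNIV. snd p i) = 0" by simp
        then show False using \<open>2 \<le> (\<Sum>i\<in>UNIV. snd p i)\<close> by simp
      qed
      then obtain i where "snd p i \<noteq> 0" by blast
      then show ?thesis by (auto intro: bexI[of _ i])
    qed
    then show ?thesis unfolding S(3) by (intro sum.neutral ballI) simp
  qed
  then show ?thesis by (simp add: vec_eq_iff)
qed

lemma G_cont:
  assumes "poly_map_sq_ideal (G :: complex \<Rightarrow> complex^'n \<Rightarrow> complex^'n)"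
    and "continuous_on T f" "continuous_on T g"
  shows "continuous_on T (\<lambda>s. G (f s) (g s))"
proof -
  obtain S c where S: "\<And>k. finite (S k)" "\<And>k a \<alpha>. (a, \<alpha>) \<in> S k \<Longrightarrow> 2 \<le> (\<Sum>i\<in>UNIV. \<alpha> i)"
    "\<And>k x y. G x y $ k = (\<Sum>p\<in>S k. c k p * x ^ fst p * (\<Prod>i\<in>UNIV. (y $ i) ^ (snd p i)))"
    using poly_obtain[OF assms(1)] by blast
  have eq: "(\<lambda>s. G (f s) (g s)) = (\<lambda>s. \<chi> k. (\<Sum>p\<in>S k. c k p * f s ^ fst p * (\<Prod>i\<in>UNIV. (g s $ i) ^ (snd p i))))"
    by (rule ext) (simp add: vec_eq_iff S(3))
  show ?thesis unfolding eq
    by (intro continuous_intros assms(2,3))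
qed

lemma G_lip:
  assumes "poly_map_sq_ideal (G :: complex \<Rightarrow> complex^'n \<Rightarrow> complex^'n)"
  shows "\<exists>D::real\<Rightarrow>real. (\<forall>R. 0 \<le> D R) \<and> (\<forall>\<rho> x u v. 0 < \<rho> \<longrightarrow> cmod x \<le> 2 \<longrightarrow> norm u \<le> \<rho> \<longrightarrow> norm v \<le> \<rho> \<longrightarrow>
      norm (G x u - G x v) \<le> D (max 1 \<rho>) * \<rho> * norm (u - v))"
proof -
  obtain S c where S: "\<And>k. finite (S k)" "\<And>k a \<alpha>. (a, \<alpha>) \<in> S k \<Longrightarrow> 2 \<le> (\<Sum>i\<in>UNIV. \<alpha> i)"
    "\<And>k x y. G x y $ k = (\<Sum>p\<in>S k. c k p * x ^ fst p * (\<Prod>i\<in>UNIV. (y $ i) ^ (snd p i)))"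
    using poly_obtain[OF assms] by blast
  define Dk where "Dk k R = (\<Sum>p\<in>S k. cmod (c k p) * 2 ^ fst p * (real (\<Sum>i\<in>UNIV. snd p i) * R ^ (\<Sum>i\<in>UNIV. snd p i)))" for k R
  define D where "D R = (\<Sum>k\<in>UNIV. Dk k (max 0 R))" for R
  have Dpos: "0 \<le> D R" for R unfolding D_def Dk_def
    by (auto intro!: sum_nonneg mult_nonneg_nonneg)
  have comp: "norm (G x u $ k - G x v $ k) \<le> Dk k (max 1 \<rho>) * \<rho> * norm (u - v)"
    if "0 < \<rho>" "cmod x \<le> 2" "norm u \<le> \<rho>" "norm v \<le> \<rho>" for \<rho> x u v k
  proof -
    have "G x u $ k - G x v $ k = (\<Sum>p\<in>S k. c k p * x ^ fst p * ((\<Prod>i\<in>UNIV. (u $ i) ^ (snd p i)) - (\<Prod>i\<in>UNIV. (v $ i) ^ (snd p i))))"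
      unfolding S(3) sum_subtractf[symmetric] by (simp only: right_diff_distrib)
    also have "norm \<dots> \<le> (\<Sum>p\<in>S k. norm (c k p * x ^ fst p * ((\<Prod>i\<in>UNIV. (u $ i) ^ (snd p i)) - (\<Prod>i\<in>UNIV. (v $ i) ^ (snd p i)))))"
      by (rule norm_sum)
    also have "\<dots> \<le> (\<Sum>p\<in>S k. cmod (c k p) * 2 ^ fst p * (real (\<Sum>i\<in>UNIV. snd p i) * (max 1 \<rho>) ^ (\<Sum>i\<in>UNIV. snd p i) * \<rho> * norm (u - v)))"
    proof (rule sum_mono)
      fix p assume p: "p \<in> S k"
      have "2 \<le> (\<Sum>i\<in>UNIV. snd p i)" using S(2)[of "fst p" "snd p" k] p by simp
      then have m: "norm ((\<Prod>i\<in>UNIV. (u $ i) ^ (snd p i)) - (\<Prod>i\<in>UNIV. (v $ i) ^ (snd p i)))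
          \<le> real (\<Sum>i\<in>UNIV. snd p i) * (max 1 \<rho>) ^ (\<Sum>i\<in>UNIV. snd p i) * \<rho> * norm (u - v)"
        using that by (intro mono_diff_bound) auto
      have "cmod x ^ fst p \<le> 2 ^ fst p" using that by (intro power_mono) auto
      then have "cmod (c k p) * cmod x ^ fst p \<le> cmod (c k p) * 2 ^ fst p"
        by (rule mult_left_mono) simp
      then show "norm (c k p * x ^ fst p * ((\<Prod>i\<in>UNIV. (u $ i) ^ (snd p i)) - (\<Prod>i\<in>UNIV. (v $ i) ^ (snd p i))))
          \<le> cmod (c k p) * 2 ^ fst p * (real (\<Sum>i\<in>UNIV. snd p i) * (max 1 \<rho>) ^ (\<Sum>i\<in>UNIV. snd p i) * \<rho> * norm (u - v))"
        unfolding norm_mult norm_power using m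
        by (rule mult_mono) simp_all
    qed
    also have "\<dots> = Dk k (max 1 \<rho>) * (\<rho> * norm (u - v))"
      unfolding Dk_def sum_distrib_right by (simp only: mult.assoc)
    also have "\<dots> = Dk k (max 1 \<rho>) * \<rho> * norm (u - v)" by (simp only: mult.assoc)
    finally show ?thesis .
  qed
  show ?thesis
  proof (intro exI[of _ D] conjI allI impI)
    show "0 \<le> D R" for R by (rule Dpos)
    fix \<rho> x u v assume h: "0 < (\<rho>::real)" "cmod x \<le> 2" "norm (u::complex^'n) \<le> \<rho>" "norm (v::complex^'n) \<le> \<rho>"
    have "norm (G x u - G x v) \<le> (\<Sum>k\<in>UNIV. norm ((G x u - G x v) $ k))"
      by (rule norm_le_l1_vec)
    also have "\<dots> \<le> (\<Sum>k\<in>UNIV. Dk k (max 1 \<rho>) * \<rho> * norm (u - v))"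
      by (intro sum_mono) (use comp[OF h] in simp)
    also have "\<dots> = D (max 1 \<rho>) * \<rho> * norm (u - v)"
      by (simp add: D_def sum_distrib_right)
    finally show "norm (G x u - G x v) \<le> D (max 1 \<rho>) * \<rho> * norm (u - v)" .
  qed
qed



lemma rate_real:
  fixes s \<theta> Rh Ih W K1 \<delta>0 \<delta>1 :: real
  assumes "-\<delta>1 * W \<le> Rh" "Rh \<le> -\<delta>0 * W" "\<bar>Rh\<bar> \<le> K1 * W" "\<bar>Ih\<bar> \<le> K1 * W" "\<bar>\<theta>\<bar> \<le> pi"
    "s > - ln 2" "0 \<le> W" "\<delta>0 > 0" "\<delta>1 > 0"
  shows "s * Rh - \<theta> * Ih \<le> (-\<delta>0 * s + ((pi + ln 2) * K1 + \<delta>1 * ln 2)) * W"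
    and "(-\<delta>1 * s - ((pi + ln 2) * K1 + \<delta>1 * ln 2)) * W \<le> s * Rh - \<theta> * Ih"
proof -
  have K1: "0 \<le> K1 * W" using assms(4) by linarith
  have ti: "\<bar>\<theta> * Ih\<bar> \<le> pi * (K1 * W)"
    unfolding abs_mult using assms(4,5) K1 by (intro mult_mono) auto
  have l2: "0 < ln (2::real)" by simp
  have "0 \<le> \<delta>1 * ln 2 * W" using assms(7,9) l2 by simp
  have sR_up: "s * Rh \<le> -\<delta>0 * s * W + ln 2 * (K1 * W)"
  proof (cases "s \<ge> 0")
    case True
    then have "s * Rh \<le> s * (-\<delta>0 * W)" using assms(2) by (rule mult_left_mono[rotated])
    moreover have "0 \<le> ln 2 * (K1 * W)" using K1 l2 by simp
    ultimately show ?thesis by (simp add: mult_ac)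
  next
    case False
    then have "\<bar>s\<bar> \<le> ln 2" using assms(6) by auto
    then have "\<bar>s * Rh\<bar> \<le> ln 2 * (K1 * W)" unfolding abs_mult using assms(3) K1 by (intro mult_mono) auto
    moreover have "0 \<le> -\<delta>0 * s * W"
    proof -
      have "\<delta>0 * s \<le> 0" using False assms(8) by (intro mult_nonneg_nonpos) auto
      then have "\<delta>0 * s * W \<le> 0" using assms(7) by (rule mult_nonpos_nonneg)
      then show ?thesis by simp
    qed
    ultimately show ?thesis by linarith
  qed
  have sR_lo: "-\<delta>1 * s * W - ln 2 * (K1 * W) - \<delta>1 * ln 2 * W \<le> s * Rh"
  proof (cases "s \<ge> 0")
    case True
    then have "s * (-\<delta>1 * W) \<le> s * Rh" using assms(1) by (rule mult_left_mono[rotated])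
    moreover have "0 \<le> ln 2 * (K1 * W)" using K1 l2 by simp
    moreover have "0 \<le> \<delta>1 * ln 2 * W" using assms(7,9) l2 by simp
    ultimately show ?thesis by (simp add: mult_ac)
  next
    case False
    then have "\<bar>s\<bar> \<le> ln 2" using assms(6) by auto
    then have "\<bar>s * Rh\<bar> \<le> ln 2 * (K1 * W)" unfolding abs_mult using assms(3) K1 by (intro mult_mono) auto
    moreover have "-\<delta>1 * s * W \<le> \<delta>1 * ln 2 * W"
    proof -
      have "\<delta>1 * (-s) \<le> \<delta>1 * ln 2" using assms(6,9) by (intro mult_left_mono) auto
      then have "-\<delta>1 * s \<le> \<delta>1 * ln 2" by simp
      then show ?thesis using assms(7) by (rule mult_right_mono)
    qed
    ultimately show ?thesis by linarith
  qed
  have ti2: "-(pi * (K1 * W)) \<le> \<theta> * Ih" "\<theta> * Ih \<le> pi * (K1 * W)" using ti by (auto simp: abs_le_iff)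
  have e1: "(-\<delta>0 * s + ((pi + ln 2) * K1 + \<delta>1 * ln 2)) * W = -\<delta>0 * s * W + pi * (K1 * W) + ln 2 * (K1 * W) + \<delta>1 * ln 2 * W"
    by (simp add: algebra_simps)
  have e2: "(-\<delta>1 * s - ((pi + ln 2) * K1 + \<delta>1 * ln 2)) * W = -\<delta>1 * s * W - pi * (K1 * W) - ln 2 * (K1 * W) - \<delta>1 * ln 2 * W"
    by (simp add: algebra_simps)
  show "s * Rh - \<theta> * Ih \<le> (-\<delta>0 * s + ((pi + ln 2) * K1 + \<delta>1 * ln 2)) * W"
    unfolding e1 using sR_up ti2 \<open>0 \<le> \<delta>1 * ln 2 * W\<close> by linarith
  show "(-\<delta>1 * s - ((pi + ln 2) * K1 + \<delta>1 * ln 2)) * W \<le> s * Rh - \<theta> * Ih"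
    unfolding e2 using sR_lo ti2 by linarith
qed



lemma slit_facts:
  assumes "x0 \<in> slit_disc2"
  shows "x0 \<noteq> 0" "cmod x0 < 2" "Re (- Ln x0) = - ln (cmod x0)" "\<bar>Im (- Ln x0)\<bar> \<le> pi"
    "- ln (cmod x0) > - ln 2"
proof -
  show nz: "x0 \<noteq> 0" using assms by (auto simp: slit_disc2_def)
  show c2: "cmod x0 < 2" using assms by (auto simp: slit_disc2_def)
  show "Re (- Ln x0) = - ln (cmod x0)" using nz by simp
  show "\<bar>Im (- Ln x0)\<bar> \<le> pi" using mpi_less_Arg[of x0] Arg_le_pi[of x0] Arg_eq_Im_Ln[OF nz] by auto
  show "- ln (cmod x0) > - ln 2" using nz c2 by simp
qed

lemma X_bound:
  assumes "x0 \<in> slit_disc2" "t \<in> {0..1}"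
  shows "cmod (exp (complex_of_real (1 - t) * Ln x0)) \<le> 2"
proof -
  have nz: "x0 \<noteq> 0" and c2: "cmod x0 < 2" using slit_facts[OF assms(1)] by auto
  have e: "cmod (exp (complex_of_real (1 - t) * Ln x0)) = exp ((1 - t) * ln (cmod x0))"
    using nz by simp
  show ?thesis
  proof (cases "ln (cmod x0) \<le> 0")
    case True
    then have "(1 - t) * ln (cmod x0) \<le> 0" using assms(2) by (intro mult_nonneg_nonpos) auto
    then have "exp ((1 - t) * ln (cmod x0)) \<le> 1" by simp
    then show ?thesis unfolding e by linarith
  next
    case False
    then have "(1 - t) * ln (cmod x0) \<le> 1 * ln (cmod x0)" using assms(2) by (intro mult_right_mono) auto
    then have "exp ((1 - t) * ln (cmod x0)) \<le> exp (ln (cmod x0))" by simp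
    also have "\<dots> = cmod x0" using nz by simp
    finally show ?thesis unfolding e using c2 by linarith
  qed
qed

lemma smult_vec_lambda: "c *s (v::'a::times^'n) = (\<chi> i. c * v $ i)"
  by (simp add: vec_eq_iff)

lemma continuous_on_smult_vec [continuous_intros]:
  fixes f :: "'b::topological_space \<Rightarrow> complex^'n"
  assumes "continuous_on S f"
  shows "continuous_on S (\<lambda>s. c *s f s)"
  unfolding smult_vec_lambda by (intro continuous_intros assms)

lemma continuous_on_mvmult [continuous_intros]:
  fixes f :: "'b::topological_space \<Rightarrow> complex^'n"
  assumes "continuous_on S f"
  shows "continuous_on S (\<lambda>s. (A::complex^'n^'m) *v f s)"
  unfolding matrix_vector_mult_def by (intro continuous_intros assms)

locale flowctx =
  fixes A :: "complex^'n^'n" and G :: "complex \<Rightarrow> complex^'n \<Rightarrow> complex^'n"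
    and \<delta>0 \<delta>1 \<epsilon> KA :: real and D :: "real \<Rightarrow> real"
  assumes G: "poly_map_sq_ideal G"
    and pos: "\<delta>0 > 0" "\<delta>1 > 0" "\<epsilon> > 0"
    and bnd_up: "\<And>y. Re (herm (A *v y) y) \<le> (-\<delta>0-\<epsilon>)*(norm y)\<^sup>2"
    and bnd_lo: "\<And>y. (-\<delta>1+\<epsilon>)*(norm y)\<^sup>2 \<le> Re (herm (A *v y) y)"
    and KA: "KA > 0" "\<And>y. norm (A *v y) \<le> KA * norm y"
    and Dpos: "\<And>R. 0 \<le> D R"
    and Dlip: "\<And>\<rho> x u v. 0<\<rho> \<Longrightarrow> cmod x \<le> 2 \<Longrightarrow> norm u \<le> \<rho> \<Longrightarrow> norm v \<le> \<rho> \<Longrightarrow>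
        norm (G x u - G x v) \<le> D (max 1 \<rho>) * \<rho> * norm (u - v)"
begin

definition "rho = min 1 (\<epsilon> / (D 1 + 1))"
definition "K1 = KA + \<epsilon>"
definition "MM = (pi + ln 2) * K1 + \<delta>1 * ln 2"
definition "RR = \<delta>0 * ln 2 + MM"
definition "rr = rho * exp (- RR)"
definition "Xf x0 t = exp (complex_of_real (1 - t) * Ln x0)"
definition "F x0 t w = (- Ln x0) *s (A *v w + G (Xf x0 t) w)"
definition "P w = (rho / max rho (norm w)) *\<^sub>R w"
definition "Ft x0 t w = F x0 t (P w)"

lemma rho: "0 < rho" "rho \<le> 1" "D 1 * rho \<le> \<epsilon>"
proof -
  have D1: "0 \<le> D 1" by (rule Dpos)
  show "0 < rho" using pos D1 by (simp add: rho_def)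
  show "rho \<le> 1" by (simp add: rho_def)
  have "rho \<le> \<epsilon> / (D 1 + 1)" by (simp add: rho_def)
  then have "D 1 * rho \<le> D 1 * (\<epsilon> / (D 1 + 1))" using D1 by (rule mult_left_mono)
  also have "\<dots> \<le> \<epsilon>" using D1 pos by (simp add: field_simps)
  finally show "D 1 * rho \<le> \<epsilon>" .
qed

lemma MM_pos: "0 \<le> MM"
proof -
  have "0 \<le> K1" using KA pos by (simp add: K1_def)
  moreover have "0 \<le> pi + ln 2" using pi_gt3 by simp
  moreover have "0 \<le> \<delta>1 * ln 2" using pos by simp
  ultimately show ?thesis unfolding MM_def by simp
qed

lemma RR_pos: "0 \<le> RR"
  using MM_pos pos unfolding RR_def by simp

lemma Gsmall:
  assumes "cmod x \<le> 2" "norm u \<le> rho" "norm v \<le> rho"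
  shows "norm (G x u - G x v) \<le> \<epsilon> * norm (u - v)"
proof -
  have "norm (G x u - G x v) \<le> D (max 1 rho) * rho * norm (u - v)"
    using Dlip[OF rho(1) assms] .
  also have "\<dots> = (D 1 * rho) * norm (u - v)" using rho(2) by (simp add: max_def)
  also have "\<dots> \<le> \<epsilon> * norm (u - v)" using rho(3) by (rule mult_right_mono) simp
  finally show ?thesis .
qed

lemma F_diff: "F x0 t w1 - F x0 t w2 = (- Ln x0) *s (A *v (w1 - w2) + (G (Xf x0 t) w1 - G (Xf x0 t) w2))"
proof -
  have e: "(A *v w1 + a) - (A *v w2 + b) = A *v (w1 - w2) + (a - b)" for a b :: "complex^'n"
    by (simp add: matrix_vector_mult_diff_distrib)
  show ?thesis unfolding F_def vector_ssub_ldistrib[symmetric] e ..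
qed

lemma F0: "F x0 t 0 = 0"
  unfolding F_def using G_zero[OF G] by simp

lemma rate:
  assumes x0: "x0 \<in> slit_disc2" and t: "t \<in> {0..1}" and w: "norm w1 \<le> rho" "norm w2 \<le> rho"
  shows "inner (F x0 t w1 - F x0 t w2) (w1 - w2) \<le> (-\<delta>0 * (- ln (cmod x0)) + MM) * (norm (w1 - w2))\<^sup>2"
    and "(-\<delta>1 * (- ln (cmod x0)) - MM) * (norm (w1 - w2))\<^sup>2 \<le> inner (F x0 t w1 - F x0 t w2) (w1 - w2)"
proof -
  let ?w = "w1 - w2" and ?g = "G (Xf x0 t) w1 - G (Xf x0 t) w2"
  let ?z = "A *v ?w + ?g" and ?c = "- Ln x0"
  let ?W = "(norm ?w)\<^sup>2"
  have Xb: "cmod (Xf x0 t) \<le> 2" using X_bound[OF x0 t] by (simp add: Xf_def)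
  have g: "norm ?g \<le> \<epsilon> * norm ?w" by (rule Gsmall[OF Xb w])
  have gw: "\<bar>Re (herm ?g ?w)\<bar> \<le> \<epsilon> * ?W"
  proof -
    have "\<bar>Re (herm ?g ?w)\<bar> \<le> norm ?g * norm ?w" by (rule abs_Re_herm)
    also have "\<dots> \<le> (\<epsilon> * norm ?w) * norm ?w" using g by (rule mult_right_mono) simp
    finally show ?thesis by (simp add: power2_eq_square mult_ac)
  qed
  have hsplit: "Re (herm ?z ?w) = Re (herm (A *v ?w) ?w) + Re (herm ?g ?w)"
    by (simp add: herm_add)
  have e1: "(-\<delta>0-\<epsilon>) * ?W = -\<delta>0 * ?W - \<epsilon> * ?W" and e2: "(-\<delta>1+\<epsilon>) * ?W = -\<delta>1 * ?W + \<epsilon> * ?W"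
    by (simp_all add: algebra_simps)
  have R_up: "Re (herm ?z ?w) \<le> -\<delta>0 * ?W" using hsplit bnd_up[of ?w] gw unfolding e1 by linarith
  have R_lo: "-\<delta>1 * ?W \<le> Re (herm ?z ?w)" using hsplit bnd_lo[of ?w] gw unfolding e2 by linarith
  have zb: "norm ?z \<le> K1 * norm ?w"
  proof -
    have "norm ?z \<le> norm (A *v ?w) + norm ?g" by (rule norm_triangle_ineq)
    also have "\<dots> \<le> KA * norm ?w + \<epsilon> * norm ?w" using KA(2)[of ?w] g by linarith
    finally show ?thesis by (simp add: K1_def algebra_simps)
  qed
  have zw: "norm ?z * norm ?w \<le> K1 * ?W"
  proof -
    have "norm ?z * norm ?w \<le> (K1 * norm ?w) * norm ?w" using zb by (rule mult_right_mono) simp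
    then show ?thesis by (simp add: power2_eq_square mult_ac)
  qed
  have Rb: "\<bar>Re (herm ?z ?w)\<bar> \<le> K1 * ?W" using abs_Re_herm[of ?z ?w] zw by linarith
  have Ib: "\<bar>Im (herm ?z ?w)\<bar> \<le> K1 * ?W" using abs_Im_herm[of ?z ?w] zw by linarith
  have inn: "inner (F x0 t w1 - F x0 t w2) ?w = Re ?c * Re (herm ?z ?w) - Im ?c * Im (herm ?z ?w)"
    unfolding F_diff by (rule inner_smult)
  have sf: "Re ?c = - ln (cmod x0)" "\<bar>Im ?c\<bar> \<le> pi" "- ln (cmod x0) > - ln 2"
    using slit_facts[OF x0] by auto
  note rr = rate_real[OF R_lo R_up Rb Ib sf(2), of "Re ?c", unfolded sf(1), OF sf(3) zero_le_power2 pos(1) pos(2)]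
  show "inner (F x0 t w1 - F x0 t w2) ?w \<le> (-\<delta>0 * (- ln (cmod x0)) + MM) * ?W"
    using rr(1) unfolding inn sf(1) MM_def by simp
  show "(-\<delta>1 * (- ln (cmod x0)) - MM) * ?W \<le> inner (F x0 t w1 - F x0 t w2) ?w"
    using rr(2) unfolding inn sf(1) MM_def by simp
qed


end


context flowctx begin

lemma max_lip: "\<bar>max r x - max r y\<bar> \<le> \<bar>x - (y::real)\<bar>"
  by (simp add: max_def)

lemma P_small: "norm w \<le> rho \<Longrightarrow> P w = w"
  using rho(1) by (simp add: P_def max_def)

lemma P_scale: "P w = (rho / max rho (norm w)) *\<^sub>R w" "0 < rho / max rho (norm w)" "rho / max rho (norm w) \<le> 1"
  using rho(1) by (auto simp: P_def)

lemma P_norm: "norm (P w) \<le> rho"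
proof -
  have m: "0 < max rho (norm w)" "norm w \<le> max rho (norm w)" using rho(1) by auto
  have "norm (P w) = rho * norm w / max rho (norm w)" using rho(1) by (simp add: P_def)
  also have "\<dots> \<le> rho" using m rho(1) by (simp add: divide_le_eq mult_left_mono)
  finally show ?thesis .
qed

lemma P_lip: "norm (P a - P b) \<le> 2 * norm (a - b)"
proof -
  define ma where "ma = max rho (norm a)"
  define mb where "mb = max rho (norm b)"
  define la where "la = rho / ma"
  define lb where "lb = rho / mb"
  have pos: "0 < ma" "0 < mb" "rho \<le> ma" "norm b \<le> mb" using rho(1) by (auto simp: ma_def mb_def)
  have la1: "0 \<le> la" "la \<le> 1" using pos rho(1) by (auto simp: la_def)
  have "P a - P b = la *\<^sub>R (a - b) + (la - lb) *\<^sub>R b"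
    by (simp add: P_def la_def lb_def ma_def mb_def algebra_simps)
  then have "norm (P a - P b) \<le> la * norm (a - b) + \<bar>la - lb\<bar> * norm b"
    using norm_triangle_ineq[of "la *\<^sub>R (a - b)" "(la - lb) *\<^sub>R b"] la1 by simp
  also have "\<dots> \<le> 1 * norm (a - b) + norm (a - b)"
  proof (rule add_mono)
    show "la * norm (a - b) \<le> 1 * norm (a - b)" using la1 by (intro mult_right_mono) auto
    have "la - lb = (mb - ma) * (rho / (ma * mb))" using pos by (simp add: la_def lb_def field_simps)
    then have "\<bar>la - lb\<bar> = \<bar>mb - ma\<bar> * (rho / (ma * mb))" using pos rho(1) by (simp add: abs_mult)
    then have e: "\<bar>la - lb\<bar> * norm b = \<bar>mb - ma\<bar> * (rho * norm b / (ma * mb))" by simp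
    have r: "rho * norm b / (ma * mb) \<le> 1"
      using pos rho(1) by (simp add: divide_le_eq mult_mono)
    have m: "\<bar>mb - ma\<bar> \<le> norm (a - b)"
    proof -
      have "\<bar>mb - ma\<bar> \<le> \<bar>norm b - norm a\<bar>" unfolding ma_def mb_def by (rule max_lip)
      also have "\<dots> \<le> norm (a - b)" by (metis norm_minus_commute norm_triangle_ineq3)
      finally show ?thesis .
    qed
    have "\<bar>mb - ma\<bar> * (rho * norm b / (ma * mb)) \<le> norm (a - b) * 1"
      using m r pos rho(1) by (intro mult_mono) auto
    then show "\<bar>la - lb\<bar> * norm b \<le> norm (a - b)" using e by simp
  qed
  finally show ?thesis by simp
qed

lemma P_cont: "continuous_on S y \<Longrightarrow> continuous_on S (\<lambda>s. P (y s))"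
  unfolding P_def using rho(1) by (intro continuous_intros) auto

lemma Ft_lip:
  assumes x0: "x0 \<in> slit_disc2" and t: "t \<in> {0..1}"
  shows "norm (Ft x0 t a - Ft x0 t b) \<le> (cmod (Ln x0) * K1 * 2) * norm (a - b)"
proof -
  have Xb: "cmod (Xf x0 t) \<le> 2" using X_bound[OF x0 t] by (simp add: Xf_def)
  have g: "norm (G (Xf x0 t) (P a) - G (Xf x0 t) (P b)) \<le> \<epsilon> * norm (P a - P b)"
    by (rule Gsmall[OF Xb P_norm P_norm])
  have "norm (Ft x0 t a - Ft x0 t b) = cmod (Ln x0) * norm (A *v (P a - P b) + (G (Xf x0 t) (P a) - G (Xf x0 t) (P b)))"
    unfolding Ft_def F_diff norm_smult_vec by simp
  also have "\<dots> \<le> cmod (Ln x0) * (K1 * norm (P a - P b))"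
  proof (rule mult_left_mono)
    have "norm (A *v (P a - P b) + (G (Xf x0 t) (P a) - G (Xf x0 t) (P b))) \<le> KA * norm (P a - P b) + \<epsilon> * norm (P a - P b)"
      using norm_triangle_ineq[of "A *v (P a - P b)" "G (Xf x0 t) (P a) - G (Xf x0 t) (P b)"] KA(2)[of "P a - P b"] g
      by linarith
    then show "norm (A *v (P a - P b) + (G (Xf x0 t) (P a) - G (Xf x0 t) (P b))) \<le> K1 * norm (P a - P b)"
      by (simp add: K1_def algebra_simps)
  qed simp
  also have "\<dots> \<le> cmod (Ln x0) * (K1 * (2 * norm (a - b)))"
    using P_lip[of a b] KA pos by (intro mult_left_mono) (auto simp: K1_def)
  finally show ?thesis by (simp add: mult_ac)
qed

lemma Ft_cont:
  assumes "continuous_on {0..1} y"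
  shows "continuous_on {0..1} (\<lambda>s. Ft x0 s (y s))"
proof -
  have Pc: "continuous_on {0..1} (\<lambda>s. P (y s))" by (rule P_cont[OF assms])
  have Xc: "continuous_on {0..1} (\<lambda>s. Xf x0 s)" unfolding Xf_def by (intro continuous_intros)
  have Gc: "continuous_on {0..1} (\<lambda>s. G (Xf x0 s) (P (y s)))" by (rule G_cont[OF G Xc Pc])
  show ?thesis unfolding Ft_def F_def by (intro continuous_intros Pc Gc)
qed

lemma rate0:
  assumes x0: "x0 \<in> slit_disc2" and t: "t \<in> {0..1}" and w: "norm w \<le> rho"
  shows "inner (F x0 t w) w \<le> RR * (norm w)\<^sup>2"
proof -
  have z: "norm (0::complex^'n) \<le> rho" using rho(1) by simp
  have "inner (F x0 t w - F x0 t 0) (w - 0) \<le> (-\<delta>0 * (- ln (cmod x0)) + MM) * (norm (w - 0))\<^sup>2"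
    by (rule rate(1)[OF x0 t w z])
  then have a: "inner (F x0 t w) w \<le> (\<delta>0 * ln (cmod x0) + MM) * (norm w)\<^sup>2" by (simp add: F0)
  have "\<delta>0 * ln (cmod x0) \<le> \<delta>0 * ln 2"
    using slit_facts[OF x0] pos by (intro mult_left_mono) auto
  then have "(\<delta>0 * ln (cmod x0) + MM) * (norm w)\<^sup>2 \<le> RR * (norm w)\<^sup>2"
    unfolding RR_def by (intro mult_right_mono) auto
  with a show ?thesis by linarith
qed

lemma Ft_apriori:
  assumes x0: "x0 \<in> slit_disc2" and t: "t \<in> {0..1}"
  shows "inner (Ft x0 t y) y \<le> RR * (norm y)\<^sup>2"
proof -
  define l where "l = rho / max rho (norm y)"
  have l: "P y = l *\<^sub>R y" "0 < l" "l \<le> 1" using P_scale[of y] by (auto simp: l_def)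
  have "inner (F x0 t (P y)) (P y) \<le> RR * (norm (P y))\<^sup>2" by (rule rate0[OF x0 t P_norm])
  then have "l * inner (F x0 t (P y)) y \<le> l * (l * (RR * (norm y)\<^sup>2))"
    using l by (simp add: power2_eq_square mult_ac)
  then have "inner (F x0 t (P y)) y \<le> l * (RR * (norm y)\<^sup>2)" using l(2) by simp
  also have "\<dots> \<le> 1 * (RR * (norm y)\<^sup>2)" using l RR_pos by (intro mult_right_mono) auto
  finally show ?thesis by (simp add: Ft_def)
qed

lemma sol_iff_F: "is_flow_sol A G x0 u y \<longleftrightarrow> y 0 = u \<and> (\<forall>t\<in>{0..1}. (y has_vector_derivative F x0 t (y t)) (at t within {0..1}))"
  by (simp add: is_flow_sol_def F_def Xf_def)

lemma existence:
  assumes x0: "x0 \<in> slit_disc2" and u: "norm u < rr"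
  shows "\<exists>y. is_flow_sol A G x0 u y \<and> (\<forall>t\<in>{0..1}. norm (y t) \<le> rho)"
proof -
  have "0 \<le> cmod (Ln x0) * K1 * 2" using KA pos by (simp add: K1_def)
  then have Kp: "0 < cmod (Ln x0) * K1 * 2 + 1" by linarith
  have "\<exists>y. y 0 = u \<and> (\<forall>t\<in>{0..1}. (y has_vector_derivative Ft x0 t (y t)) (at t within {0..1}))"
  proof (rule ode_exists[OF _ _ Kp])
    show "continuous_on {0..1} (\<lambda>s. Ft x0 s (y s))" if "continuous_on {0..1} y" for y
      by (rule Ft_cont[OF that])
    fix t :: real and a b :: "complex^'n" assume t: "t \<in> {0..1}"
    have "norm (Ft x0 t a - Ft x0 t b) \<le> (cmod (Ln x0) * K1 * 2) * norm (a - b)" by (rule Ft_lip[OF x0 t])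
    also have "\<dots> \<le> (cmod (Ln x0) * K1 * 2 + 1) * norm (a - b)" by (intro mult_right_mono) auto
    finally show "norm (Ft x0 t a - Ft x0 t b) \<le> (cmod (Ln x0) * K1 * 2 + 1) * norm (a - b)" .
  qed
  then obtain y where y0: "y 0 = u" and yd: "\<And>t. t\<in>{0..1} \<Longrightarrow> (y has_vector_derivative Ft x0 t (y t)) (at t within {0..1})"
    by blast
  have bd: "\<And>s. s \<in> {0..1} \<Longrightarrow> inner (Ft x0 s (y s)) (y s) \<le> RR * (norm (y s))\<^sup>2"
    by (rule Ft_apriori[OF x0])
  have yb: "norm (y t) \<le> rho" if t: "t \<in> {0..1}" for t
  proof -
    have g: "(norm (y t))\<^sup>2 \<le> exp (2 * RR * t) * (norm (y 0))\<^sup>2"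
      by (rule growth_le[OF yd bd t])
    have e1: "exp (2 * RR * t) \<le> exp (2 * RR)"
    proof -
      have "2 * RR * t \<le> 2 * RR * 1" using t RR_pos by (intro mult_left_mono) auto
      then show ?thesis by simp
    qed
    have e2: "(norm (y 0))\<^sup>2 \<le> rr\<^sup>2" using u y0 by (intro power_mono) auto
    have e3: "exp (2 * RR * t) * (norm (y 0))\<^sup>2 \<le> exp (2 * RR) * rr\<^sup>2"
      by (rule mult_mono[OF e1 e2]) auto
    have e4: "rr\<^sup>2 = rho\<^sup>2 * (exp (- RR))\<^sup>2" unfolding rr_def by (rule power_mult_distrib)
    have e5: "exp (2 * RR) * (exp (- RR))\<^sup>2 = 1"
    proof -
      have "(exp (- RR))\<^sup>2 = exp (- RR) * exp (- RR)" by (rule power2_eq_square)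
      also have "\<dots> = exp (- RR + - RR)" by (rule mult_exp_exp)
      finally have "exp (2 * RR) * (exp (- RR))\<^sup>2 = exp (2 * RR) * exp (- RR + - RR)" by simp
      also have "\<dots> = exp (2 * RR + (- RR + - RR))" by (rule mult_exp_exp)
      also have "2 * RR + (- RR + - RR) = 0" by simp
      finally show ?thesis by simp
    qed
    have "exp (2 * RR) * rr\<^sup>2 = rho\<^sup>2" unfolding e4 using e5 by (simp add: mult.left_commute)
    then have "(norm (y t))\<^sup>2 \<le> rho\<^sup>2" using g e3 by linarith
    then show ?thesis by (rule power2_le_imp_le) (use rho(1) in simp)
  qed
  show ?thesis
  proof (intro exI conjI ballI)
    have "(y has_vector_derivative F x0 t (y t)) (at t within {0..1})" if t: "t \<in> {0..1}" for t
    proof -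
      have "Ft x0 t (y t) = F x0 t (y t)" using P_small[OF yb[OF t]] by (simp add: Ft_def)
      then show ?thesis using yd[OF t] by simp
    qed
    then show "is_flow_sol A G x0 u y"
      unfolding sol_iff_F using y0 by blast
    show "norm (y t) \<le> rho" if "t \<in> {0..1}" for t using yb that .
  qed
qed

end


context flowctx begin

lemma sol_deriv:
  assumes "is_flow_sol A G x0 u y"
  shows "y 0 = u" "\<And>t. t\<in>{0..1} \<Longrightarrow> (y has_vector_derivative F x0 t (y t)) (at t within {0..1})"
  using assms unfolding sol_iff_F by auto

lemma uniq:
  assumes x0: "x0 \<in> slit_disc2" and s1: "is_flow_sol A G x0 u y1" and s2: "is_flow_sol A G x0 u y2"
    and t: "t \<in> {0..1}"
  shows "y1 t = y2 t"
proof -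
  note d1 = sol_deriv(2)[OF s1] and d2 = sol_deriv(2)[OF s2]
  have c1: "continuous_on {0..1} y1" by (rule cont_of_deriv[OF d1])
  have c2: "continuous_on {0..1} y2" by (rule cont_of_deriv[OF d2])
  have "compact (y1 ` {0..1} \<union> y2 ` {0..1})"
    by (intro compact_Un compact_continuous_image c1 c2 compact_Icc)
  then have "bounded (y1 ` {0..1} \<union> y2 ` {0..1})" by (rule compact_imp_bounded)
  then obtain B where B: "B > 0" "\<And>z. z \<in> y1 ` {0..1} \<union> y2 ` {0..1} \<Longrightarrow> norm z \<le> B"
    by (auto simp: bounded_pos)
  define L where "L = cmod (Ln x0) * (KA + D (max 1 B) * B)"
  have lip: "norm (F x0 s (y1 s) - F x0 s (y2 s)) \<le> L * norm (y1 s - y2 s)" if s: "s \<in> {0..1}" for s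
  proof -
    have Xb: "cmod (Xf x0 s) \<le> 2" using X_bound[OF x0 s] by (simp add: Xf_def)
    have b1: "norm (y1 s) \<le> B" and b2: "norm (y2 s) \<le> B" using B(2) s by auto
    have g: "norm (G (Xf x0 s) (y1 s) - G (Xf x0 s) (y2 s)) \<le> D (max 1 B) * B * norm (y1 s - y2 s)"
      by (rule Dlip[OF B(1) Xb b1 b2])
    have "norm (A *v (y1 s - y2 s) + (G (Xf x0 s) (y1 s) - G (Xf x0 s) (y2 s)))
          \<le> KA * norm (y1 s - y2 s) + D (max 1 B) * B * norm (y1 s - y2 s)"
      using norm_triangle_ineq[of "A *v (y1 s - y2 s)" "G (Xf x0 s) (y1 s) - G (Xf x0 s) (y2 s)"]
        KA(2)[of "y1 s - y2 s"] g by linarith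
    also have "\<dots> = (KA + D (max 1 B) * B) * norm (y1 s - y2 s)" by (simp add: algebra_simps)
    finally have "cmod (Ln x0) * norm (A *v (y1 s - y2 s) + (G (Xf x0 s) (y1 s) - G (Xf x0 s) (y2 s)))
          \<le> cmod (Ln x0) * ((KA + D (max 1 B) * B) * norm (y1 s - y2 s))"
      by (rule mult_left_mono) simp
    then show ?thesis unfolding F_diff norm_smult_vec L_def by (simp add: mult.assoc)
  qed
  have dd: "((\<lambda>s. y1 s - y2 s) has_vector_derivative (F x0 s (y1 s) - F x0 s (y2 s))) (at s within {0..1})"
    if s: "s \<in> {0..1}" for s
    using d1[OF s] d2[OF s] by (rule has_vector_derivative_diff)
  have bd: "inner (F x0 s (y1 s) - F x0 s (y2 s)) (y1 s - y2 s) \<le> L * (norm (y1 s - y2 s))\<^sup>2"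
    if s: "s \<in> {0..1}" for s
  proof -
    have "inner (F x0 s (y1 s) - F x0 s (y2 s)) (y1 s - y2 s) \<le> norm (F x0 s (y1 s) - F x0 s (y2 s)) * norm (y1 s - y2 s)"
      by (rule norm_cauchy_schwarz)
    also have "\<dots> \<le> (L * norm (y1 s - y2 s)) * norm (y1 s - y2 s)"
      by (rule mult_right_mono[OF lip[OF s]]) simp
    finally show ?thesis by (simp add: power2_eq_square mult.assoc)
  qed
  have "(norm (y1 t - y2 t))\<^sup>2 \<le> exp (2 * L * t) * (norm (y1 0 - y2 0))\<^sup>2"
    by (rule growth_le[where d = "\<lambda>s. y1 s - y2 s", OF dd bd t])
  also have "\<dots> = 0" using sol_deriv(1)[OF s1] sol_deriv(1)[OF s2] by simp
  finally show ?thesis by simp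
qed

lemma exp_sq: "exp (2 * (a::real) * 1) * X\<^sup>2 = (exp a * X)\<^sup>2"
proof -
  have "exp (2 * a * 1) = exp (a + a)" by simp
  also have "\<dots> = exp a * exp a" by (rule exp_add)
  finally have "exp (2 * a * 1) = exp a * exp a" .
  then show ?thesis by (simp add: power2_eq_square mult_ac)
qed

lemma est:
  assumes x0: "x0 \<in> slit_disc2" and s1: "is_flow_sol A G x0 u y1" and s2: "is_flow_sol A G x0 v y2"
    and b1: "\<forall>t\<in>{0..1}. norm (y1 t) \<le> rho" and b2: "\<forall>t\<in>{0..1}. norm (y2 t) \<le> rho"
  shows "norm (y1 1 - y2 1) \<le> exp MM * cmod x0 powr \<delta>0 * norm (u - v)"
    and "exp (- MM) * cmod x0 powr \<delta>1 * norm (u - v) \<le> norm (y1 1 - y2 1)"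
proof -
  note d1 = sol_deriv(2)[OF s1] and d2 = sol_deriv(2)[OF s2]
  have i0: "y1 0 - y2 0 = u - v" using sol_deriv(1)[OF s1] sol_deriv(1)[OF s2] by simp
  have nz: "x0 \<noteq> 0" using slit_facts[OF x0] by simp
  have dd: "((\<lambda>s. y1 s - y2 s) has_vector_derivative (F x0 s (y1 s) - F x0 s (y2 s))) (at s within {0..1})"
    if s: "s \<in> {0..1}" for s
    using d1[OF s] d2[OF s] by (rule has_vector_derivative_diff)
  have one: "(1::real) \<in> {0..1}" by simp
  define a where "a = -\<delta>0 * (- ln (cmod x0)) + MM"
  define a' where "a' = -\<delta>1 * (- ln (cmod x0)) - MM"
  have up: "inner (F x0 s (y1 s) - F x0 s (y2 s)) (y1 s - y2 s) \<le> a * (norm (y1 s - y2 s))\<^sup>2"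
    if s: "s \<in> {0..1}" for s
    unfolding a_def using rate(1)[OF x0 s] b1 b2 s by blast
  have lo: "a' * (norm (y1 s - y2 s))\<^sup>2 \<le> inner (F x0 s (y1 s) - F x0 s (y2 s)) (y1 s - y2 s)"
    if s: "s \<in> {0..1}" for s
    unfolding a'_def using rate(2)[OF x0 s] b1 b2 s by blast
  have ea: "exp a = exp MM * cmod x0 powr \<delta>0"
    using nz by (simp add: a_def powr_def exp_add mult_ac)
  have ea': "exp a' = exp (- MM) * cmod x0 powr \<delta>1"
    using nz by (simp add: a'_def powr_def exp_diff exp_minus field_simps)
  have "(norm (y1 1 - y2 1))\<^sup>2 \<le> exp (2 * a * 1) * (norm (y1 0 - y2 0))\<^sup>2"
    by (rule growth_le[where d = "\<lambda>s. y1 s - y2 s", OF dd up one])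
  then have "(norm (y1 1 - y2 1))\<^sup>2 \<le> (exp a * norm (u - v))\<^sup>2" unfolding exp_sq i0 .
  then have "norm (y1 1 - y2 1) \<le> exp a * norm (u - v)"
    by (rule power2_le_imp_le) simp
  then show "norm (y1 1 - y2 1) \<le> exp MM * cmod x0 powr \<delta>0 * norm (u - v)" unfolding ea .
  have "exp (2 * a' * 1) * (norm (y1 0 - y2 0))\<^sup>2 \<le> (norm (y1 1 - y2 1))\<^sup>2"
    by (rule growth_ge[where d = "\<lambda>s. y1 s - y2 s", OF dd lo one])
  then have "(exp a' * norm (u - v))\<^sup>2 \<le> (norm (y1 1 - y2 1))\<^sup>2" unfolding exp_sq i0 .
  then have "exp a' * norm (u - v) \<le> norm (y1 1 - y2 1)"
    by (rule power2_le_imp_le) simp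
  then show "exp (- MM) * cmod x0 powr \<delta>1 * norm (u - v) \<le> norm (y1 1 - y2 1)" unfolding ea' .
qed

lemma flow_map_eq:
  assumes x0: "x0 \<in> slit_disc2" and s: "is_flow_sol A G x0 u y"
  shows "flow_map A G x0 u = y 1"
  unfolding flow_map_def
proof (rule the_equality)
  show "\<exists>y'. is_flow_sol A G x0 u y' \<and> y' 1 = y 1" using s by blast
  fix z assume "\<exists>y'. is_flow_sol A G x0 u y' \<and> y' 1 = z"
  then obtain y' where "is_flow_sol A G x0 u y'" "y' 1 = z" by blast
  then show "z = y 1" using uniq[OF x0 _ s, of y' 1] by simp
qed

end


theorem lemma6p1:
  fixes A :: "complex^'n^'n"
    and G :: "complex \<Rightarrow> complex^'n \<Rightarrow> complex^'n"
    and \<delta>0 \<delta>1 \<epsilon> :: real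
  assumes G: "poly_map_sq_ideal G"
    and pos: "\<delta>0 > 0" "\<delta>1 > 0" "\<epsilon> > 0"
    and bounds: "\<And>y. y \<noteq> 0 \<Longrightarrow>
        (- \<delta>1 + \<epsilon>) * (norm y)\<^sup>2 < Re (herm (A *v y) y) \<and>
        Re (herm (A *v y) y) < (- \<delta>0 - \<epsilon>) * (norm y)\<^sup>2"
  shows "\<exists>r c0 c1. r > 0 \<and> c0 > 0 \<and> c1 > 0 \<and>
    (\<forall>x\<in>slit_disc2. \<forall>u. norm u < r \<longrightarrow> flow_defined A G x u) \<and>
    (\<forall>x\<in>slit_disc2. \<forall>u v. norm u < r \<longrightarrow> norm v < r \<longrightarrow>
        c1 * cmod x powr \<delta>1 * norm (u - v) \<le> norm (flow_map A G x u - flow_map A G x v) \<and>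
        norm (flow_map A G x u - flow_map A G x v) \<le> c0 * cmod x powr \<delta>0 * norm (u - v))"
proof -
  have h0: "herm (A *v 0) 0 = 0" by (simp add: herm_def)
  have bup: "Re (herm (A *v y) y) \<le> (-\<delta>0-\<epsilon>)*(norm y)\<^sup>2" for y
    using bounds[of y] h0 by (cases "y = 0") auto
  have blo: "(-\<delta>1+\<epsilon>)*(norm y)\<^sup>2 \<le> Re (herm (A *v y) y)" for y
    using bounds[of y] h0 by (cases "y = 0") auto
  obtain K where K: "K > 0" "\<And>x. norm (A *v x) \<le> norm x * K"
    using bounded_linear.pos_bounded[OF matrix_vector_mul_bounded_linear[of A]] by blast
  obtain D :: "real \<Rightarrow> real" where D: "\<And>R. 0 \<le> D R"
    "\<And>\<rho> x u v. 0 < \<rho> \<Longrightarrow> cmod x \<le> 2 \<Longrightarrow> norm u \<le> \<rho> \<Longrightarrow> norm v \<le> \<rho> \<Longrightarrow>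
      norm (G x u - G x v) \<le> D (max 1 \<rho>) * \<rho> * norm (u - v)"
    using G_lip[OF G] by blast
  interpret fc: flowctx A G \<delta>0 \<delta>1 \<epsilon> K D
  proof
    show "poly_map_sq_ideal G" by (rule G)
    show "\<delta>0 > 0" "\<delta>1 > 0" "\<epsilon> > 0" by (rule pos)+
    show "\<And>y. Re (herm (A *v y) y) \<le> (-\<delta>0-\<epsilon>)*(norm y)\<^sup>2" by (rule bup)
    show "\<And>y. (-\<delta>1+\<epsilon>)*(norm y)\<^sup>2 \<le> Re (herm (A *v y) y)" by (rule blo)
    show "K > 0" by (rule K(1))
    show "\<And>y. norm (A *v y) \<le> K * norm y" using K(2) by (simp add: mult.commute)
    show "\<And>R. 0 \<le> D R" by (rule D(1))
    show "\<And>\<rho> x u v. 0 < \<rho> \<Longrightarrow> cmod x \<le> 2 \<Longrightarrow> norm u \<le> \<rho> \<Longrightarrow> norm v \<le> \<rho> \<Longrightarrow>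
      norm (G x u - G x v) \<le> D (max 1 \<rho>) * \<rho> * norm (u - v)" by (rule D(2))
  qed
  show ?thesis
  proof (intro exI conjI ballI allI impI)
    show "fc.rr > 0" using fc.rho(1) by (simp add: fc.rr_def)
    show "exp fc.MM > 0" "exp (- fc.MM) > 0" by simp_all
    fix x assume x: "x \<in> slit_disc2"
    {
      fix u :: "complex^'n" assume u: "norm u < fc.rr"
      show "flow_defined A G x u" using fc.existence[OF x u] by (auto simp: flow_defined_def)
    }
    fix u v :: "complex^'n" assume u: "norm u < fc.rr" and v: "norm v < fc.rr"
    obtain yu where yu: "is_flow_sol A G x u yu" "\<forall>t\<in>{0..1}. norm (yu t) \<le> fc.rho"
      using fc.existence[OF x u] by blast
    obtain yv where yv: "is_flow_sol A G x v yv" "\<forall>t\<in>{0..1}. norm (yv t) \<le> fc.rho"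
      using fc.existence[OF x v] by blast
    have fu: "flow_map A G x u = yu 1" by (rule fc.flow_map_eq[OF x yu(1)])
    have fv: "flow_map A G x v = yv 1" by (rule fc.flow_map_eq[OF x yv(1)])
    show "exp (- fc.MM) * cmod x powr \<delta>1 * norm (u - v) \<le> norm (flow_map A G x u - flow_map A G x v)"
      unfolding fu fv by (rule fc.est(2)[OF x yu(1) yv(1) yu(2) yv(2)])
    show "norm (flow_map A G x u - flow_map A G x v) \<le> exp fc.MM * cmod x powr \<delta>0 * norm (u - v)"
      unfolding fu fv by (rule fc.est(1)[OF x yu(1) yv(1) yu(2) yv(2)])
  qed
qed


end
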